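(* Let $N\ge1$ and consider configurations $(S_{j,i},\sigma_i)$ with $S_{j,i}\in\{-1,0,1\}$ for $j\in\mathbb Z_6$, $i\in\mathbb Z_N$, and $\sigma_i\in\{-\tfrac12,\tfrac12\}$ (indices $j$ mod 6, $i$ mod $N$). Let $D\in\mathbb R$ and $$\mathcal H=\sum_{i=1}^N\Bigl[-\sum_{j=1}^{6}\bigl(S_{j,i}S_{j,i+1}+S_{j,i}S_{j+1,i}+S_{j,i}\sigma_i+D\,S_{j,i}^2\bigr)-\sigma_i\sigma_{i+1}\Bigr].$$ Then $\min\mathcal H/N=\min\bigl(-\tfrac{61}{4}-6D,\,-\tfrac14\bigr)$. Moreover, if $D>-\tfrac52$, the minimizers are exactly the two configurations with $S_{j,i}=\tau$, $\sigma_i=\tau/2$ for all $i,j$ ($\tau=\pm1$), with energy $N(-\tfrac{61}{4}-6D)$; if $D<-\tfrac52$, the minimizers are exactly the two configurations with all $S_{j,i}=0$ and all $\sigma_i$ equal, with energy $-N/4$.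
   Context: This is the mixed spin-1/2 (core, $\sigma_i$) and spin-1 (shell, $S_{j,i}$) hexagonal nanowire with couplings $J_1=J_s=J_c=1$ (core–shell, shell–shell, core–core) and single-ion anisotropy $D$, with periodic boundary conditions. The two ground states are called ferromagnetic (FM) and core-ferromagnetic (CFM). *)

theory Defs
  imports Complex_Main
begin

text \<open>Indices are 0-based and
  taken modulo 6 (for j) and modulo N (for i), i.e. periodic boundary conditions.\<close>

definition valid_config :: "nat \<Rightarrow> (nat \<Rightarrow> nat \<Rightarrow> int) \<Rightarrow> (nat \<Rightarrow> real) \<Rightarrow> bool" where
  "valid_config N S \<sigma> \<longleftrightarrow>
     (\<forall>i<N. \<forall>j<6. S j i \<in> {-1, 0, 1}) \<and> (\<forall>i<N. \<sigma> i \<in> {-1/2, 1/2})"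

definition hamiltonian :: "nat \<Rightarrow> real \<Rightarrow> (nat \<Rightarrow> nat \<Rightarrow> int) \<Rightarrow> (nat \<Rightarrow> real) \<Rightarrow> real" where
  "hamiltonian N D S \<sigma> =
     (\<Sum>i<N. - (\<Sum>j<6.
                   of_int (S j i) * of_int (S j ((i + 1) mod N))
                 + of_int (S j i) * of_int (S ((j + 1) mod 6) i)
                 + of_int (S j i) * \<sigma> i
                 + D * (of_int (S j i))\<^sup>2)
             - \<sigma> i * \<sigma> ((i + 1) mod N))"

end

theory Submission
  imports Defs
begin

lemma shift_sum:
  fixes f :: "nat \<Rightarrow> real"
  assumes "n \<ge> 1"
  shows "(\<Sum>i<n. f ((i + 1) mod n)) = (\<Sum>i<n. f i)"
proof -
  obtain m where n: "n = Suc m" using assms by (cases n) auto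
  have "(\<Sum>i<Suc m. f ((i + 1) mod Suc m)) = (\<Sum>i<m. f ((i + 1) mod Suc m)) + f 0"
    by (simp add: sum.lessThan_Suc)
  also have "(\<Sum>i<m. f ((i + 1) mod Suc m)) = (\<Sum>i<m. f (Suc i))"
    by (rule sum.cong) auto
  also have "\<dots> + f 0 = (\<Sum>i<Suc m. f i)"
    by (simp only: sum.lessThan_Suc_shift add.commute)
  finally show ?thesis using n by simp
qed

definition qq :: "nat \<Rightarrow> real \<Rightarrow> (nat \<Rightarrow> nat \<Rightarrow> int) \<Rightarrow> (nat \<Rightarrow> real) \<Rightarrow> nat \<Rightarrow> nat \<Rightarrow> real" where
  "qq N D S \<sigma> j i = (let s = real_of_int (S j i); a = real_of_int (S j ((i+1) mod N));
       b = real_of_int (S ((j+1) mod 6) i) in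
     -(5/2+D)*s^2 + s^2/2 - s * \<sigma> i + (s-a)^2/2 + (s-b)^2/2)"

lemma decomp:
  assumes "N \<ge> 1"
  shows "hamiltonian N D S \<sigma> = (\<Sum>i<N. \<Sum>j<6. qq N D S \<sigma> j i) - (\<Sum>i<N. \<sigma> i * \<sigma> ((i+1) mod N))"
proof -
  define s where "s j i = real_of_int (S j i)" for j i
  have pt: "- (of_int (S j i) * of_int (S j ((i + 1) mod N))
                 + of_int (S j i) * of_int (S ((j + 1) mod 6) i)
                 + of_int (S j i) * \<sigma> i
                 + D * (of_int (S j i))\<^sup>2) = qq N D S \<sigma> j i
         + (s j i ^2 - (s j ((i+1) mod N) ^2 + s ((j+1) mod 6) i ^2)/2)" for i j
    unfolding qq_def s_def Let_def by (simp add: power2_eq_square field_simps)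
  have h: "hamiltonian N D S \<sigma> = (\<Sum>i<N. \<Sum>j<6. qq N D S \<sigma> j i)
      + (\<Sum>i<N. \<Sum>j<6. (s j i ^2 - (s j ((i+1) mod N) ^2 + s ((j+1) mod 6) i ^2)/2))
      - (\<Sum>i<N. \<sigma> i * \<sigma> ((i+1) mod N))"
    unfolding hamiltonian_def sum_negf[symmetric] pt
    by (simp add: sum.distrib sum_subtractf)
  have z1: "(\<Sum>i<N. \<Sum>j<6::nat. s j ((i+1) mod N) ^2) = (\<Sum>i<N. \<Sum>j<6::nat. s j i ^2)"
    apply (subst sum.swap) apply (subst (2) sum.swap)
    using shift_sum[OF assms, of "\<lambda>i. s _ i ^2"] by simp
  have z2: "(\<Sum>i<N. \<Sum>j<6::nat. s ((j+1) mod 6) i ^2) = (\<Sum>i<N. \<Sum>j<6::nat. s j i ^2)"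
    using shift_sum[of 6 "\<lambda>j. s j _ ^2"] by simp
  have "(\<Sum>i<N. \<Sum>j<6. (s j i ^2 - (s j ((i+1) mod N) ^2 + s ((j+1) mod 6) i ^2)/2)) = 0"
    using z1 z2 by (simp add: sum_subtractf sum_divide_distrib[symmetric] sum.distrib)
  with h show ?thesis by simp
qed


lemma pt_bounds:
  fixes s a b :: int and x D :: real
  assumes "s \<in> {-1,0,1}" "a \<in> {-1,0,1}" "b \<in> {-1,0,1}" "x \<in> {-1/2,1/2}"
  defines "q \<equiv> -(5/2+D)*(real_of_int s)^2 + (real_of_int s)^2/2 - real_of_int s * x
      + (real_of_int s - real_of_int a)^2/2 + (real_of_int s - real_of_int b)^2/2"
  shows "D \<ge> -5/2 \<Longrightarrow> q \<ge> -(5/2+D)"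
    and "D \<le> -5/2 \<Longrightarrow> q \<ge> 0"
    and "D > -5/2 \<Longrightarrow> (q = -(5/2+D) \<longleftrightarrow> (real_of_int s = 2 * x \<and> a = s \<and> b = s))"
    and "D < -5/2 \<Longrightarrow> (q = 0 \<longleftrightarrow> (s = 0 \<and> a = 0 \<and> b = 0))"
proof -
  have s: "s = -1 \<or> s = 0 \<or> s = 1" and a: "a = -1 \<or> a = 0 \<or> a = 1" and b: "b = -1 \<or> b = 0 \<or> b = 1"
   and x: "x = -1/2 \<or> x = 1/2" using assms(1-4) by auto
  show "D \<ge> -5/2 \<Longrightarrow> q \<ge> -(5/2+D)" using s a b x unfolding q_def
    by (elim disjE) (simp_all add: power2_eq_square)
  show "D \<le> -5/2 \<Longrightarrow> q \<ge> 0" using s a b x unfolding q_def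
    by (elim disjE) (simp_all add: power2_eq_square)
  show "D > -5/2 \<Longrightarrow> (q = -(5/2+D) \<longleftrightarrow> (real_of_int s = 2 * x \<and> a = s \<and> b = s))" using s a b x unfolding q_def
    by (elim disjE) (simp_all add: power2_eq_square)
  show "D < -5/2 \<Longrightarrow> (q = 0 \<longleftrightarrow> (s = 0 \<and> a = 0 \<and> b = 0))" using s a b x unfolding q_def
    by (elim disjE) (simp_all add: power2_eq_square)
qed

lemma chain:
  fixes \<sigma> :: "nat \<Rightarrow> real"
  assumes "N \<ge> 1"
  shows "(\<forall>i<N. \<sigma> i = \<sigma> ((i+1) mod N)) \<longleftrightarrow> (\<forall>i<N. \<forall>k<N. \<sigma> i = \<sigma> k)"
proof
  assume h: "\<forall>i<N. \<sigma> i = \<sigma> ((i+1) mod N)"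
  have "i < N \<Longrightarrow> \<sigma> i = \<sigma> 0" for i
  proof (induction i)
    case 0 then show ?case by simp
  next
    case (Suc i)
    then have "i < N" by simp
    then have "\<sigma> i = \<sigma> ((i+1) mod N)" using h by blast
    moreover have "(i+1) mod N = Suc i" using Suc.prems by simp
    ultimately show ?case using Suc.IH \<open>i < N\<close> by simp
  qed
  then show "\<forall>i<N. \<forall>k<N. \<sigma> i = \<sigma> k"
  proof (intro allI impI)
    fix i k assume "i < N" "k < N"
    assume e: "\<And>i. i < N \<Longrightarrow> \<sigma> i = \<sigma> 0"
    show "\<sigma> i = \<sigma> k" using e[OF \<open>i<N\<close>] e[OF \<open>k<N\<close>] by (rule trans[OF _ sym])
  qed
next
  assume h: "\<forall>i<N. \<forall>k<N. \<sigma> i = \<sigma> k"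
  show "\<forall>i<N. \<sigma> i = \<sigma> ((i+1) mod N)"
  proof (intro allI impI)
    fix i assume "i < N"
    moreover have "(i+1) mod N < N" using assms by simp
    ultimately show "\<sigma> i = \<sigma> ((i+1) mod N)" using h by blast
  qed
qed

lemma half_prod:
  fixes x y :: real
  assumes "x \<in> {-1/2,1/2}" "y \<in> {-1/2,1/2}"
  shows "x * y \<le> 1/4" "x * y = 1/4 \<longleftrightarrow> x = y"
proof -
  have x: "x = -1/2 \<or> x = 1/2" and y: "y = -1/2 \<or> y = 1/2" using assms by auto
  show "x * y \<le> 1/4" using x y by (elim disjE; simp only:; simp)
  show "x * y = 1/4 \<longleftrightarrow> x = y" using x y by (elim disjE; simp only:; simp)
qed

lemma Ybound:
  fixes \<sigma> :: "nat \<Rightarrow> real"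
  assumes "N \<ge> 1" "\<forall>i<N. \<sigma> i \<in> {-1/2, 1/2}"
  shows "(\<Sum>i<N. \<sigma> i * \<sigma> ((i+1) mod N)) \<le> real N / 4"
    and "(\<Sum>i<N. \<sigma> i * \<sigma> ((i+1) mod N)) = real N / 4 \<longleftrightarrow> (\<forall>i<N. \<forall>k<N. \<sigma> i = \<sigma> k)"
proof -
  have mem: "\<sigma> i \<in> {-1/2,1/2}" "\<sigma> ((i+1) mod N) \<in> {-1/2,1/2}" if "i < N" for i
  proof -
    have "(i+1) mod N < N" using assms(1) by simp
    then show "\<sigma> i \<in> {-1/2,1/2}" "\<sigma> ((i+1) mod N) \<in> {-1/2,1/2}" using assms(2) that by blast+
  qed
  have nn: "0 \<le> 1/4 - \<sigma> i * \<sigma> ((i+1) mod N)" if "i \<in> {..<N}" for i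
    using half_prod(1)[OF mem[of i]] that by simp
  have pz: "(1/4 - \<sigma> i * \<sigma> ((i+1) mod N) = 0) \<longleftrightarrow> (\<sigma> i = \<sigma> ((i+1) mod N))" if "i \<in> {..<N}" for i
    using half_prod(2)[OF mem[of i]] that by simp
  have e: "(\<Sum>i<N. 1/4 - \<sigma> i * \<sigma> ((i+1) mod N)) = real N / 4 - (\<Sum>i<N. \<sigma> i * \<sigma> ((i+1) mod N))"
    by (simp add: sum_subtractf)
  have s0: "0 \<le> (\<Sum>i<N. 1/4 - \<sigma> i * \<sigma> ((i+1) mod N))"
    by (rule sum_nonneg) (rule nn)
  then show "(\<Sum>i<N. \<sigma> i * \<sigma> ((i+1) mod N)) \<le> real N / 4"
    unfolding e by linarith
  have "(\<Sum>i<N. \<sigma> i * \<sigma> ((i+1) mod N)) = real N / 4 \<longleftrightarrow> (\<Sum>i<N. 1/4 - \<sigma> i * \<sigma> ((i+1) mod N)) = 0"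
    unfolding e by linarith
  also have "\<dots> \<longleftrightarrow> (\<forall>i\<in>{..<N}. 1/4 - \<sigma> i * \<sigma> ((i+1) mod N) = 0)"
    by (rule sum_nonneg_eq_0_iff) (simp, rule nn)
  also have "\<dots> \<longleftrightarrow> (\<forall>i<N. \<sigma> i = \<sigma> ((i+1) mod N))"
    using pz by (simp only: Ball_def lessThan_iff) blast
  also have "\<dots> \<longleftrightarrow> (\<forall>i<N. \<forall>k<N. \<sigma> i = \<sigma> k)"
    by (rule chain[OF assms(1)])
  finally show "(\<Sum>i<N. \<sigma> i * \<sigma> ((i+1) mod N)) = real N / 4 \<longleftrightarrow> (\<forall>i<N. \<forall>k<N. \<sigma> i = \<sigma> k)" .
qed

lemma double_sum_zero:
  fixes f :: "nat \<Rightarrow> nat \<Rightarrow> real"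
  assumes "\<And>i j. i < N \<Longrightarrow> j < 6 \<Longrightarrow> f j i \<ge> 0"
  shows "(\<Sum>i<N. \<Sum>j<6. f j i) \<ge> 0"
    and "(\<Sum>i<N. \<Sum>j<6. f j i) = 0 \<longleftrightarrow> (\<forall>i<N. \<forall>j<6. f j i = 0)"
proof -
  have nn: "\<And>i. i < N \<Longrightarrow> (\<Sum>j<6. f j i) \<ge> 0" by (intro sum_nonneg assms) auto
  show "(\<Sum>i<N. \<Sum>j<6. f j i) \<ge> 0" by (rule sum_nonneg) (simp add: nn)
  have "(\<Sum>i<N. \<Sum>j<6. f j i) = 0 \<longleftrightarrow> (\<forall>i\<in>{..<N}. (\<Sum>j<6. f j i) = 0)"
    by (rule sum_nonneg_eq_0_iff) (auto intro: nn)
  also have "\<dots> \<longleftrightarrow> (\<forall>i<N. \<forall>j<6. f j i = 0)"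
  proof -
    have "i < N \<Longrightarrow> (\<Sum>j<6. f j i) = 0 \<longleftrightarrow> (\<forall>j<6. f j i = 0)" for i
      by (subst sum_nonneg_eq_0_iff) (auto intro: assms)
    then show ?thesis by auto
  qed
  finally show "(\<Sum>i<N. \<Sum>j<6. f j i) = 0 \<longleftrightarrow> (\<forall>i<N. \<forall>j<6. f j i = 0)" .
qed

lemma qq_pt:
  assumes v: "valid_config N S \<sigma>" and N: "N \<ge> 1" and i: "i < N" and j: "j < 6"
  shows "D \<ge> -5/2 \<Longrightarrow> qq N D S \<sigma> j i \<ge> -(5/2+D)"
    and "D \<le> -5/2 \<Longrightarrow> qq N D S \<sigma> j i \<ge> 0"
    and "D > -5/2 \<Longrightarrow> (qq N D S \<sigma> j i = -(5/2+D) \<longleftrightarrow>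
          (real_of_int (S j i) = 2 * \<sigma> i \<and> S j ((i+1) mod N) = S j i \<and> S ((j+1) mod 6) i = S j i))"
    and "D < -5/2 \<Longrightarrow> (qq N D S \<sigma> j i = 0 \<longleftrightarrow>
          (S j i = 0 \<and> S j ((i+1) mod N) = 0 \<and> S ((j+1) mod 6) i = 0))"
proof -
  have i1: "(i+1) mod N < N" using N by simp
  have j1: "(j+1) mod 6 < (6::nat)" by simp
  have m1: "S j i \<in> {-1,0,1}" using v i j unfolding valid_config_def by blast
  have m2: "S j ((i+1) mod N) \<in> {-1,0,1}" using v i1 j unfolding valid_config_def by blast
  have m3: "S ((j+1) mod 6) i \<in> {-1,0,1}" using v i j1 unfolding valid_config_def by blast
  have m4: "\<sigma> i \<in> {-1/2,1/2}" using v i unfolding valid_config_def by blast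
  note P = pt_bounds[OF m1 m2 m3 m4, of D]
  show "D \<ge> -5/2 \<Longrightarrow> qq N D S \<sigma> j i \<ge> -(5/2+D)"
    and "D \<le> -5/2 \<Longrightarrow> qq N D S \<sigma> j i \<ge> 0"
    and "D > -5/2 \<Longrightarrow> (qq N D S \<sigma> j i = -(5/2+D) \<longleftrightarrow>
          (real_of_int (S j i) = 2 * \<sigma> i \<and> S j ((i+1) mod N) = S j i \<and> S ((j+1) mod 6) i = S j i))"
    and "D < -5/2 \<Longrightarrow> (qq N D S \<sigma> j i = 0 \<longleftrightarrow>
          (S j i = 0 \<and> S j ((i+1) mod N) = 0 \<and> S ((j+1) mod 6) i = 0))"
    unfolding qq_def Let_def using P by auto
qed

lemma Xbound:
  fixes D :: real
  assumes v: "valid_config N S \<sigma>" and N: "N \<ge> 1"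
  defines "X \<equiv> (\<Sum>i<N. \<Sum>j<6. qq N D S \<sigma> j i)"
  shows "D \<ge> -5/2 \<Longrightarrow> X \<ge> - real N * 6 * (5/2+D)"
    and "D \<le> -5/2 \<Longrightarrow> X \<ge> 0"
    and "D > -5/2 \<Longrightarrow> (X = - real N * 6 * (5/2+D) \<longleftrightarrow> (\<forall>i<N. \<forall>j<6.
          (real_of_int (S j i) = 2 * \<sigma> i \<and> S j ((i+1) mod N) = S j i \<and> S ((j+1) mod 6) i = S j i)))"
    and "D < -5/2 \<Longrightarrow> (X = 0 \<longleftrightarrow> (\<forall>i<N. \<forall>j<6.
          (S j i = 0 \<and> S j ((i+1) mod N) = 0 \<and> S ((j+1) mod 6) i = 0)))"
proof -
  have sh: "(\<Sum>i<N. \<Sum>j<6. qq N D S \<sigma> j i + (5/2+D)) = X + real N * 6 * (5/2+D)"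
    unfolding X_def by (simp add: sum.distrib)
  {
    assume D: "D \<ge> -5/2"
    have "(\<Sum>i<N. \<Sum>j<6. qq N D S \<sigma> j i + (5/2+D)) \<ge> 0"
      by (rule double_sum_zero(1)) (use qq_pt(1)[OF v N _ _ D] in force)
    then show "X \<ge> - real N * 6 * (5/2+D)" using sh by linarith
  }
  {
    assume D: "D \<le> -5/2"
    show "X \<ge> 0" unfolding X_def
      by (rule double_sum_zero(1)) (use qq_pt(2)[OF v N _ _ D] in force)
  }
  {
    assume D: "D > -5/2"
    have "X = - real N * 6 * (5/2+D) \<longleftrightarrow> (\<Sum>i<N. \<Sum>j<6. qq N D S \<sigma> j i + (5/2+D)) = 0"
      using sh by linarith
    also have "\<dots> \<longleftrightarrow> (\<forall>i<N. \<forall>j<6. qq N D S \<sigma> j i + (5/2+D) = 0)"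
      by (rule double_sum_zero(2)) (use qq_pt(1)[OF v N _ _ less_imp_le[OF D]] in force)
    also have "\<dots> \<longleftrightarrow> (\<forall>i<N. \<forall>j<6.
          (real_of_int (S j i) = 2 * \<sigma> i \<and> S j ((i+1) mod N) = S j i \<and> S ((j+1) mod 6) i = S j i))"
    proof -
      have "i < N \<Longrightarrow> j < 6 \<Longrightarrow> (qq N D S \<sigma> j i + (5/2+D) = 0) \<longleftrightarrow>
          (real_of_int (S j i) = 2 * \<sigma> i \<and> S j ((i+1) mod N) = S j i \<and> S ((j+1) mod 6) i = S j i)" for i j
        using qq_pt(3)[OF v N _ _ D, of i j] by linarith
      then show ?thesis by blast
    qed
    finally show "X = - real N * 6 * (5/2+D) \<longleftrightarrow> (\<forall>i<N. \<forall>j<6.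
          (real_of_int (S j i) = 2 * \<sigma> i \<and> S j ((i+1) mod N) = S j i \<and> S ((j+1) mod 6) i = S j i))" .
  }
  {
    assume D: "D < -5/2"
    have "X = 0 \<longleftrightarrow> (\<forall>i<N. \<forall>j<6. qq N D S \<sigma> j i = 0)"
      unfolding X_def
      by (rule double_sum_zero(2)) (use qq_pt(2)[OF v N _ _ less_imp_le[OF D]] in force)
    also have "\<dots> \<longleftrightarrow> (\<forall>i<N. \<forall>j<6.
          (S j i = 0 \<and> S j ((i+1) mod N) = 0 \<and> S ((j+1) mod 6) i = 0))"
      using qq_pt(4)[OF v N _ _ D] by blast
    finally show "X = 0 \<longleftrightarrow> (\<forall>i<N. \<forall>j<6.
          (S j i = 0 \<and> S j ((i+1) mod N) = 0 \<and> S ((j+1) mod 6) i = 0))" .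
  }
qed

theorem mainTheorem8:
  fixes N :: nat and D :: real
  assumes "N \<ge> 1"
  shows "(\<forall>S \<sigma>. valid_config N S \<sigma> \<longrightarrow>
            hamiltonian N D S \<sigma> / real N \<ge> min (-61/4 - 6*D) (-1/4))
       \<and> (\<exists>S \<sigma>. valid_config N S \<sigma> \<and>
            hamiltonian N D S \<sigma> / real N = min (-61/4 - 6*D) (-1/4))
       \<and> (D > -5/2 \<longrightarrow>
            (\<forall>S \<sigma>. valid_config N S \<sigma> \<longrightarrow>
               (hamiltonian N D S \<sigma> = real N * (-61/4 - 6*D) \<longleftrightarrow>
                (\<exists>\<tau>::int. \<tau> \<in> {-1, 1} \<and>
                   (\<forall>i<N. \<sigma> i = of_int \<tau> / 2 \<and> (\<forall>j<6. S j i = \<tau>))))))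
       \<and> (D < -5/2 \<longrightarrow>
            (\<forall>S \<sigma>. valid_config N S \<sigma> \<longrightarrow>
               (hamiltonian N D S \<sigma> = - real N / 4 \<longleftrightarrow>
                ((\<forall>i<N. \<forall>j<6. S j i = 0) \<and> (\<forall>i<N. \<forall>k<N. \<sigma> i = \<sigma> k)))))"
proof -
  have Npos: "real N > 0" using assms by simp
  have N0: "0 < N" using assms by simp
  have i1: "\<And>i. (i+1) mod N < N" using N0 by simp
  have j1: "\<And>j. (j+1) mod 6 < (6::nat)" by simp
  have eqm: "real N * (-61/4 - 6*D) = - real N * 6 * (5/2+D) - real N/4" by (simp add: algebra_simps)
  have vs: "\<forall>i<N. \<sigma> i \<in> {-1/2, 1/2}" if "valid_config N S \<sigma>" for S \<sigma>
    using that unfolding valid_config_def by blast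
  note dec = decomp[OF assms]
  have P1: "hamiltonian N D S \<sigma> / real N \<ge> min (-61/4 - 6*D) (-1/4)" if v: "valid_config N S \<sigma>" for S \<sigma>
  proof -
    have Y: "(\<Sum>i<N. \<sigma> i * \<sigma> ((i+1) mod N)) \<le> real N / 4" by (rule Ybound(1)[OF assms vs[OF v]])
    have "hamiltonian N D S \<sigma> \<ge> real N * min (-61/4 - 6*D) (-1/4)"
    proof (cases "D \<ge> -5/2")
      case True
      have "real N * min (-61/4 - 6*D) (-1/4) \<le> real N * (-61/4 - 6*D)"
        using Npos by (intro mult_left_mono) auto
      then show ?thesis using Xbound(1)[OF v assms True] Y dec[of D S \<sigma>] eqm by linarith
    next
      case False
      have "real N * min (-61/4 - 6*D) (-1/4) \<le> real N * (-1/4)"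
        using Npos by (intro mult_left_mono) auto
      have "D \<le> -5/2" using False by simp
      then show ?thesis using Xbound(2)[OF v assms, of D] Y dec[of D S \<sigma>] \<open>real N * min (-61/4 - 6*D) (-1/4) \<le> real N * (-1/4)\<close> by linarith
    qed
    then show ?thesis using Npos by (simp add: pos_le_divide_eq mult.commute)
  qed
  have P2: "\<exists>S \<sigma>. valid_config N S \<sigma> \<and>
            hamiltonian N D S \<sigma> / real N = min (-61/4 - 6*D) (-1/4)"
  proof (cases "D \<ge> -5/2")
    case True
    have v: "valid_config N (\<lambda>j i. 1) (\<lambda>i. 1/2)" unfolding valid_config_def by simp
    have "hamiltonian N D (\<lambda>j i. 1) (\<lambda>i. 1/2) = real N * (-61/4 - 6*D)"
      unfolding hamiltonian_def by simp
    moreover have "min (-61/4 - 6*D) (-1/4) = -61/4 - 6*D"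
    proof -
      have "-61/4 - 6*D \<le> -1/4" using True by (simp add: field_simps)
      then show ?thesis by (simp add: min_def)
    qed
    ultimately show ?thesis using v Npos by force
  next
    case False
    have v: "valid_config N (\<lambda>j i. 0) (\<lambda>i. 1/2)" unfolding valid_config_def by simp
    have "hamiltonian N D (\<lambda>j i. 0) (\<lambda>i. 1/2) = real N * (-1/4)"
      unfolding hamiltonian_def by simp
    moreover have "min (-61/4 - 6*D) (-1/4) = -1/4"
    proof -
      have "\<not> -61/4 - 6*D \<le> -1/4" using False by (simp add: field_simps)
      then show ?thesis by (simp add: min_def)
    qed
    ultimately show ?thesis using v Npos by force
  qed
  have P3: "hamiltonian N D S \<sigma> = real N * (-61/4 - 6*D) \<longleftrightarrow>
                (\<exists>\<tau>::int. \<tau> \<in> {-1, 1} \<and>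
                   (\<forall>i<N. \<sigma> i = of_int \<tau> / 2 \<and> (\<forall>j<6. S j i = \<tau>)))"
    if v: "valid_config N S \<sigma>" and D: "D > -5/2" for S \<sigma>
  proof -
    note Y = Ybound[OF assms vs[OF v]]
    note X = Xbound[OF v assms, of D]
    have "hamiltonian N D S \<sigma> = real N * (-61/4 - 6*D) \<longleftrightarrow>
        (\<Sum>i<N. \<Sum>j<6. qq N D S \<sigma> j i) = - real N * 6 * (5/2+D) \<and>
        (\<Sum>i<N. \<sigma> i * \<sigma> ((i+1) mod N)) = real N / 4"
    proof -
      have "- real N * 6 * (5/2+D) \<le> (\<Sum>i<N. \<Sum>j<6. qq N D S \<sigma> j i)" using X(1) D by simp
      then show ?thesis using Y(1) dec[of D S \<sigma>] eqm by linarith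
    qed
    also have "\<dots> \<longleftrightarrow> (\<forall>i<N. \<forall>j<6.
          (real_of_int (S j i) = 2 * \<sigma> i \<and> S j ((i+1) mod N) = S j i \<and> S ((j+1) mod 6) i = S j i))
         \<and> (\<forall>i<N. \<forall>k<N. \<sigma> i = \<sigma> k)"
      using X(3)[OF D] Y(2) by (simp only:)
    also have "\<dots> \<longleftrightarrow> (\<exists>\<tau>::int. \<tau> \<in> {-1, 1} \<and>
                   (\<forall>i<N. \<sigma> i = of_int \<tau> / 2 \<and> (\<forall>j<6. S j i = \<tau>)))"
    proof
      assume h: "(\<forall>i<N. \<forall>j<6.
          (real_of_int (S j i) = 2 * \<sigma> i \<and> S j ((i+1) mod N) = S j i \<and> S ((j+1) mod 6) i = S j i))
         \<and> (\<forall>i<N. \<forall>k<N. \<sigma> i = \<sigma> k)"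
      have six: "0 < (6::nat)" by simp
      have s00: "real_of_int (S 0 0) = 2 * \<sigma> 0" using h N0 six by blast
      have "\<sigma> 0 \<in> {-1/2,1/2}" using vs[OF v] N0 by blast
      then have "real_of_int (S 0 0) = -1 \<or> real_of_int (S 0 0) = 1" using s00 by auto
      then have t: "S 0 0 \<in> {-1, 1}" by auto
      have "\<forall>i<N. \<sigma> i = of_int (S 0 0) / 2 \<and> (\<forall>j<6. S j i = S 0 0)"
      proof (intro allI impI conjI)
        fix i assume i: "i < N"
        have si: "\<sigma> i = \<sigma> 0" using h i N0 by blast
        then show "\<sigma> i = of_int (S 0 0) / 2" using s00 by simp
        fix j assume j: "j < (6::nat)"
        have "real_of_int (S j i) = 2 * \<sigma> i" using h i j by blast
        then have "real_of_int (S j i) = real_of_int (S 0 0)" using si s00 by simp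
        then show "S j i = S 0 0" by simp
      qed
      then show "\<exists>\<tau>::int. \<tau> \<in> {-1, 1} \<and>
                   (\<forall>i<N. \<sigma> i = of_int \<tau> / 2 \<and> (\<forall>j<6. S j i = \<tau>))" using t by blast
    next
      assume "\<exists>\<tau>::int. \<tau> \<in> {-1, 1} \<and>
                   (\<forall>i<N. \<sigma> i = of_int \<tau> / 2 \<and> (\<forall>j<6. S j i = \<tau>))"
      then obtain \<tau> :: int where t: "\<forall>i<N. \<sigma> i = of_int \<tau> / 2 \<and> (\<forall>j<6. S j i = \<tau>)" by blast
      show "(\<forall>i<N. \<forall>j<6.
          (real_of_int (S j i) = 2 * \<sigma> i \<and> S j ((i+1) mod N) = S j i \<and> S ((j+1) mod 6) i = S j i))
         \<and> (\<forall>i<N. \<forall>k<N. \<sigma> i = \<sigma> k)"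
      proof (intro allI impI conjI)
        fix i j assume i: "i < N" and j: "j < (6::nat)"
        have a: "S j i = \<tau>" "\<sigma> i = of_int \<tau> / 2" using t i j by blast+
        have b: "S j ((i+1) mod N) = \<tau>" using t i1 j by blast
        have c: "S ((j+1) mod 6) i = \<tau>" using t i j1 by blast
        show "real_of_int (S j i) = 2 * \<sigma> i" using a by simp
        show "S j ((i+1) mod N) = S j i" using a b by simp
        show "S ((j+1) mod 6) i = S j i" using a c by simp
      next
        fix i k assume "i < N" "k < N"
        then have "\<sigma> i = of_int \<tau> / 2" "\<sigma> k = of_int \<tau> / 2" using t by blast+
        then show "\<sigma> i = \<sigma> k" by simp
      qed
    qed
    finally show ?thesis .
  qed
  have P4: "hamiltonian N D S \<sigma> = - real N / 4 \<longleftrightarrow>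
                ((\<forall>i<N. \<forall>j<6. S j i = 0) \<and> (\<forall>i<N. \<forall>k<N. \<sigma> i = \<sigma> k))"
    if v: "valid_config N S \<sigma>" and D: "D < -5/2" for S \<sigma>
  proof -
    note Y = Ybound[OF assms vs[OF v]]
    note X = Xbound[OF v assms, of D]
    have "hamiltonian N D S \<sigma> = - real N / 4 \<longleftrightarrow>
        (\<Sum>i<N. \<Sum>j<6. qq N D S \<sigma> j i) = 0 \<and>
        (\<Sum>i<N. \<sigma> i * \<sigma> ((i+1) mod N)) = real N / 4"
    proof -
      have "0 \<le> (\<Sum>i<N. \<Sum>j<6. qq N D S \<sigma> j i)" using X(2) D by simp
      then show ?thesis using Y(1) dec[of D S \<sigma>] by linarith
    qed
    also have "\<dots> \<longleftrightarrow> (\<forall>i<N. \<forall>j<6.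
          (S j i = 0 \<and> S j ((i+1) mod N) = 0 \<and> S ((j+1) mod 6) i = 0))
         \<and> (\<forall>i<N. \<forall>k<N. \<sigma> i = \<sigma> k)"
      using X(4)[OF D] Y(2) by (simp only:)
    also have "\<dots> \<longleftrightarrow> ((\<forall>i<N. \<forall>j<6. S j i = 0) \<and> (\<forall>i<N. \<forall>k<N. \<sigma> i = \<sigma> k))"
      using i1 j1 by blast
    finally show ?thesis .
  qed
  show ?thesis using P1 P2 P3 P4 by blast
qed

end
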